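(* Let $\Gamma$ be a discrete group and $X$ a compact $\Gamma$-space. Then: (i) $X_0^0=\left(\bigcup_{g\in\Gamma}\partial(\operatorname{int}X^g)\right)^{c}$; (ii) if $\Gamma$ is countable, then $X_0^0$ is a dense $G_\delta$ subset of $X$; (iii) $\{x\in X:\Gamma_x=\Gamma_x^0\}\subseteq X_0^0$; (iv) $X_0^0=X$ if and only if $\operatorname{int}X^g$ is closed for all $g\in\Gamma$.
   Context: A compact $\Gamma$-space is a compact Hausdorff space with an action of $\Gamma$ by homeomorphisms. $X^g=\{x:gx=x\}$, $\partial$ denotes topological boundary, $\Gamma_x=\{g:gx=x\}$, and $\Gamma_x^0=\{g: g\text{ fixes pointwise an open neighborhood of } x\}$. $\operatorname{Sub}(\Gamma)$ is the space of subgroups of $\Gamma$ with the Chabauty topology (induced from the product topology on $\{0,1\}^\Gamma$ via characteristic functions), and $X_0^0$ is the set of points of $X$ at which the map $X\to\operatorname{Sub}(\Gamma)$, $x\mapsto\Gamma_x^0$, is continuous. *)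

theory Defs
  imports "HOL-Analysis.Analysis" "HOL-Algebra.Group"
begin

definition homeo_action :: "('g, 'b) monoid_scheme \<Rightarrow> 'a topology \<Rightarrow> ('g \<Rightarrow> 'a \<Rightarrow> 'a) \<Rightarrow> bool" where
  "homeo_action G X act \<longleftrightarrow> group G
     \<and> (\<forall>g\<in>carrier G. homeomorphic_map X X (act g))
     \<and> (\<forall>x\<in>topspace X. act \<one>\<^bsub>G\<^esub> x = x)
     \<and> (\<forall>g\<in>carrier G. \<forall>h\<in>carrier G. \<forall>x\<in>topspace X. act (g \<otimes>\<^bsub>G\<^esub> h) x = act g (act h x))"

definition fixset :: "'a topology \<Rightarrow> ('g \<Rightarrow> 'a \<Rightarrow> 'a) \<Rightarrow> 'g \<Rightarrow> 'a set" where
  "fixset X act g = {x \<in> topspace X. act g x = x}"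

definition stab :: "('g, 'b) monoid_scheme \<Rightarrow> ('g \<Rightarrow> 'a \<Rightarrow> 'a) \<Rightarrow> 'a \<Rightarrow> 'g set" where
  "stab G act x = {g \<in> carrier G. act g x = x}"

definition stab0 :: "('g, 'b) monoid_scheme \<Rightarrow> 'a topology \<Rightarrow> ('g \<Rightarrow> 'a \<Rightarrow> 'a) \<Rightarrow> 'a \<Rightarrow> 'g set" where
  "stab0 G X act x = {g \<in> carrier G. \<exists>U. openin X U \<and> x \<in> U \<and> (\<forall>y\<in>U. act g y = y)}"

definition charfun :: "('g, 'b) monoid_scheme \<Rightarrow> 'g set \<Rightarrow> ('g \<Rightarrow> bool)" where
  "charfun G H = restrict (\<lambda>g. g \<in> H) (carrier G)"

text \<open>Sub(Gamma) with the Chabauty topology: subspace of the product topology on {0,1}^Gamma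
  consisting of characteristic functions of subgroups.\<close>
definition chabauty :: "('g, 'b) monoid_scheme \<Rightarrow> ('g \<Rightarrow> bool) topology" where
  "chabauty G = subtopology (product_topology (\<lambda>g. discrete_topology (UNIV :: bool set)) (carrier G))
                  (charfun G ` {H. subgroup H G})"

definition continuous_at_point :: "'a topology \<Rightarrow> 'c topology \<Rightarrow> ('a \<Rightarrow> 'c) \<Rightarrow> 'a \<Rightarrow> bool" where
  "continuous_at_point X Y f x \<longleftrightarrow>
     (\<forall>V. openin Y V \<and> f x \<in> V \<longrightarrow> (\<exists>U. openin X U \<and> x \<in> U \<and> f ` U \<subseteq> V))"

definition X00 :: "('g, 'b) monoid_scheme \<Rightarrow> 'a topology \<Rightarrow> ('g \<Rightarrow> 'a \<Rightarrow> 'a) \<Rightarrow> 'a set" where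
  "X00 G X act = {x \<in> topspace X.
     continuous_at_point X (chabauty G) (\<lambda>y. charfun G (stab0 G X act y)) x}"

end

theory Submission
  imports Defs
begin

lemma stab0_eq:
  "stab0 G X act y = {g \<in> carrier G. y \<in> X interior_of fixset X act g}"
  unfolding stab0_def interior_of_def fixset_def
  by (auto dest: openin_subset)

lemma stab0_subgroup:
  fixes G (structure)
  assumes A: "homeo_action G X act" and y: "y \<in> topspace X"
  shows "subgroup (stab0 G X act y) G"
proof -
  interpret group G using A by (simp add: homeo_action_def)
  have one: "\<forall>x\<in>topspace X. act \<one> x = x"
   and mul: "\<forall>g\<in>carrier G. \<forall>h\<in>carrier G. \<forall>x\<in>topspace X. act (g \<otimes> h) x = act g (act h x)"
    using A by (auto simp: homeo_action_def)
  show ?thesis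
  proof
    show "stab0 G X act y \<subseteq> carrier G" by (auto simp: stab0_def)
    show "\<one> \<in> stab0 G X act y"
      using one y by (auto simp: stab0_def intro!: exI[of _ "topspace X"])
  next
    fix g h assume g: "g \<in> stab0 G X act y" and h: "h \<in> stab0 G X act y"
    then obtain U W where U: "openin X U" "y \<in> U" "\<forall>z\<in>U. act g z = z"
      and W: "openin X W" "y \<in> W" "\<forall>z\<in>W. act h z = z" and gh: "g \<in> carrier G" "h \<in> carrier G"
      by (auto simp: stab0_def)
    have "\<forall>z\<in>U \<inter> W. act (g \<otimes> h) z = z"
      using U W gh mul openin_subset[OF U(1)] by auto
    then show "g \<otimes> h \<in> stab0 G X act y"
      using U W gh by (auto simp: stab0_def intro!: exI[of _ "U \<inter> W"])
  next
    fix g assume g: "g \<in> stab0 G X act y"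
    then obtain U where U: "openin X U" "y \<in> U" "\<forall>z\<in>U. act g z = z" and gc: "g \<in> carrier G"
      by (auto simp: stab0_def)
    have "\<forall>z\<in>U. act (inv g) z = z"
    proof
      fix z assume z: "z \<in> U"
      have zt: "z \<in> topspace X" using z openin_subset[OF U(1)] by auto
      have e1: "act (inv g \<otimes> g) z = z" using one gc zt by simp
      have e2: "act (inv g \<otimes> g) z = act (inv g) (act g z)" using mul gc zt inv_closed[OF gc] by blast
      show "act (inv g) z = z" using e1 e2 U z by simp
    qed
    then show "inv g \<in> stab0 G X act y"
      using U gc by (auto simp: stab0_def intro!: exI[of _ U])
  qed
qed

lemma loc_const:
  assumes "x \<notin> X frontier_of (X interior_of S)" "x \<in> topspace X"
  shows "\<exists>U. openin X U \<and> x \<in> U \<and> (\<forall>y\<in>U. (y \<in> X interior_of S) = (x \<in> X interior_of S))"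
proof (cases "x \<in> X interior_of S")
  case True
  then show ?thesis by (intro exI[of _ "X interior_of S"]) auto
next
  case False
  then have "x \<notin> X closure_of (X interior_of S)"
    using assms by (simp add: frontier_of_def interior_of_interior_of)
  then obtain T where "x \<in> T" "openin X T" "\<forall>y\<in>T. y \<notin> X interior_of S"
    using assms(2) by (auto simp: in_closure_of)
  then show ?thesis using False by (intro exI[of _ T]) auto
qed

lemma loc_const_finite:
  assumes "finite F" "\<forall>g\<in>F. x \<notin> X frontier_of (X interior_of S g)" "x \<in> topspace X"
  shows "\<exists>U. openin X U \<and> x \<in> U \<and> (\<forall>y\<in>U. \<forall>g\<in>F. (y \<in> X interior_of S g) = (x \<in> X interior_of S g))"
  using assms
proof (induction F rule: finite_induct)
  case empty
  then show ?case by (intro exI[of _ "topspace X"]) auto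
next
  case (insert a F)
  then obtain U where U: "openin X U" "x \<in> U" "\<forall>y\<in>U. \<forall>g\<in>F. (y \<in> X interior_of S g) = (x \<in> X interior_of S g)"
    by blast
  obtain W where W: "openin X W" "x \<in> W" "\<forall>y\<in>W. (y \<in> X interior_of S a) = (x \<in> X interior_of S a)"
    using loc_const[of x X "S a"] insert.prems by blast
  have "openin X (U \<inter> W)" using U(1) W(1) by (rule openin_Int)
  moreover have "x \<in> U \<inter> W" using U(2) W(2) by blast
  moreover have "\<forall>y\<in>U \<inter> W. \<forall>g\<in>insert a F. (y \<in> X interior_of S g) = (x \<in> X interior_of S g)"
    using U(3) W(3) by blast
  ultimately show ?case by blast
qed

lemma X00_char:
  assumes A: "homeo_action G X act" and x: "x \<in> topspace X"
  shows "x \<in> X00 G X act \<longleftrightarrow> (\<forall>g\<in>carrier G. x \<notin> X frontier_of (X interior_of fixset X act g))"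
proof -
  define Og where "Og g = X interior_of fixset X act g" for g
  define f where "f = (\<lambda>y. charfun G (stab0 G X act y))"
  have fg: "g \<in> carrier G \<Longrightarrow> f y g = (y \<in> Og g)" for g y
    by (simp add: f_def charfun_def stab0_eq Og_def)
  define P where "P = product_topology (\<lambda>g. discrete_topology (UNIV :: bool set)) (carrier G)"
  define S where "S = charfun G ` {H. subgroup H G}"
  have ch: "chabauty G = subtopology P S" by (simp add: chabauty_def P_def S_def)
  have fS: "y \<in> topspace X \<Longrightarrow> f y \<in> S" for y
    using stab0_subgroup[OF A] by (auto simp: f_def S_def)
  have fP: "f y \<in> topspace P" for y
    by (auto simp: P_def f_def charfun_def)
  show ?thesis
  proof
    assume "x \<in> X00 G X act"
    then have c: "continuous_at_point X (chabauty G) f x"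
      by (simp add: X00_def f_def)
    show "\<forall>g\<in>carrier G. x \<notin> X frontier_of (X interior_of fixset X act g)"
    proof (intro ballI notI)
      fix g assume g: "g \<in> carrier G" and fr: "x \<in> X frontier_of (X interior_of fixset X act g)"
      define V where "V = {h \<in> topspace P. h g \<in> {f x g}} \<inter> S"
      have "openin P {h \<in> topspace P. h g \<in> {f x g}}"
        apply (rule openin_continuous_map_preimage[where Y="discrete_topology UNIV"])
        using g by (auto simp: P_def intro: continuous_map_product_projection)
      then have "openin (chabauty G) V" unfolding ch V_def
        by (auto simp: openin_subtopology)
      moreover have "f x \<in> V" using fS fP x by (auto simp: V_def)
      ultimately obtain U where U: "openin X U" "x \<in> U" "f ` U \<subseteq> V"
        using c by (auto simp: continuous_at_point_def)
      have U2: "\<forall>y\<in>U. (y \<in> Og g) = (x \<in> Og g)" using U(3) g fg by (auto simp: V_def)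
      have xn: "x \<notin> Og g" using fr by (simp add: Og_def frontier_of_def)
      have "x \<in> X closure_of Og g" using fr by (simp add: Og_def frontier_of_def)
      then obtain y where "y \<in> Og g" "y \<in> U" using U by (auto simp: in_closure_of)
      then show False using U2 xn by auto
    qed
  next
    assume nf: "\<forall>g\<in>carrier G. x \<notin> X frontier_of (X interior_of fixset X act g)"
    have "continuous_at_point X (chabauty G) f x"
      unfolding continuous_at_point_def
    proof (intro allI impI)
      fix V assume "openin (chabauty G) V \<and> f x \<in> V"
      then obtain W where W: "openin P W" "V = S \<inter> W" "f x \<in> W"
        unfolding ch by (auto simp: openin_subtopology)
      then obtain U' where U': "finite {i \<in> carrier G. U' i \<noteq> topspace (discrete_topology (UNIV::bool set))}"
          "f x \<in> PiE (carrier G) U'" "PiE (carrier G) U' \<subseteq> W"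
        unfolding P_def openin_product_topology_alt by blast
      define F where "F = {i \<in> carrier G. U' i \<noteq> UNIV}"
      have "finite F" using U' by (simp add: F_def)
      then obtain U where U: "openin X U" "x \<in> U"
        "\<forall>y\<in>U. \<forall>g\<in>F. (y \<in> X interior_of fixset X act g) = (x \<in> X interior_of fixset X act g)"
        using loc_const_finite[of F x X "fixset X act"] nf x by (auto simp: F_def)
      have "f y \<in> V" if y: "y \<in> U" for y
      proof -
        have "f y \<in> PiE (carrier G) U'"
        proof (rule PiE_I)
          fix i assume i: "i \<in> carrier G"
          show "f y i \<in> U' i"
          proof (cases "i \<in> F")
            case True
            then have "(y \<in> Og i) = (x \<in> Og i)" using U(3) y True unfolding Og_def by blast
            then have "f y i = f x i" using fg[OF i] by simp
            moreover have "f x i \<in> U' i" using U'(2) i by (rule PiE_mem)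
            ultimately show ?thesis by simp
          next
            case False then show ?thesis using i by (auto simp: F_def)
          qed
        next
          fix i assume "i \<notin> carrier G" then show "f y i = undefined"
            by (simp add: f_def charfun_def)
        qed
        then have "f y \<in> W" using U'(3) by blast
        moreover have "f y \<in> S" using fS[of y] y openin_subset[OF U(1)] by blast
        ultimately show ?thesis using W(2) by blast
      qed
      then show "\<exists>U. openin X U \<and> x \<in> U \<and> f ` U \<subseteq> V" using U by blast
    qed
    then show "x \<in> X00 G X act" using x by (simp add: X00_def f_def)
  qed
qed

lemma interior_frontier_open_empty:
  assumes "openin X S"
  shows "X interior_of (X frontier_of S) = {}"
proof (rule ccontr)
  let ?T = "X interior_of (X frontier_of S)"
  assume ne: "?T \<noteq> {}"
  have sub: "?T \<subseteq> X frontier_of S" by (rule interior_of_subset)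
  have "?T \<inter> X frontier_of S = ?T" using sub by (rule Int_absorb2)
  then have "?T \<inter> X frontier_of S \<noteq> {}" using ne by simp
  then have "?T \<inter> S \<noteq> {}"
    by (rule frontier_of_openin_straddle_Int(1)[OF openin_interior_of])
  moreover have "X frontier_of S \<inter> S = {}" unfolding frontier_of_openin[OF assms] by blast
  ultimately show False using sub by blast
qed

lemma fixset_closed:
  assumes A: "homeo_action G X act" and H: "Hausdorff_space X" and g: "g \<in> carrier G"
  shows "closedin X (fixset X act g)"
proof -
  have c: "continuous_map X X (act g)"
    using A g homeomorphic_imp_continuous_map unfolding homeo_action_def by blast
  have "closedin X {x \<in> topspace X. act g x = id x}"
    by (rule closedin_continuous_maps_eq[OF H c continuous_map_id])
  then show ?thesis unfolding fixset_def id_def .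
qed

theorem mainTheorem8:
  fixes G :: "('g, 'b) monoid_scheme" and X :: "'a topology" and act :: "'g \<Rightarrow> 'a \<Rightarrow> 'a"
  assumes "homeo_action G X act"
    and "compact_space X" and "Hausdorff_space X"
  shows "X00 G X act = topspace X - (\<Union>g\<in>carrier G. X frontier_of (X interior_of fixset X act g))
    \<and> (countable (carrier G) \<longrightarrow>
           gdelta_in X (X00 G X act) \<and> X closure_of (X00 G X act) = topspace X)
    \<and> {x \<in> topspace X. stab G act x = stab0 G X act x} \<subseteq> X00 G X act
    \<and> (X00 G X act = topspace X \<longleftrightarrow>
           (\<forall>g\<in>carrier G. closedin X (X interior_of fixset X act g)))"
proof -
  note A = assms(1)
  define Fr where "Fr g = X frontier_of (X interior_of fixset X act g)" for g
  have i: "X00 G X act = topspace X - (\<Union>g\<in>carrier G. Fr g)"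
    using X00_char[OF A] by (auto simp: X00_def Fr_def)
  have ne: "carrier G \<noteq> {}"
    using A monoid.one_closed[of G] group.is_monoid[of G] by (auto simp: homeo_action_def)
  have eqI: "X00 G X act = \<Inter> ((\<lambda>g. topspace X - Fr g) ` carrier G)"
    using i ne by auto
  have opn: "openin X (topspace X - Fr g)" for g
    by (simp add: Fr_def closedin_frontier_of openin_diff)
  have dense: "X closure_of (topspace X - Fr g) = topspace X" for g
    by (simp add: closure_of_complement Fr_def interior_frontier_open_empty)
  have ii: "countable (carrier G) \<longrightarrow>
           gdelta_in X (X00 G X act) \<and> X closure_of (X00 G X act) = topspace X"
  proof
    assume c: "countable (carrier G)"
    show "gdelta_in X (X00 G X act) \<and> X closure_of (X00 G X act) = topspace X"
    proof
      show "gdelta_in X (X00 G X act)" unfolding eqI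
        using c ne opn by (intro gdelta_in_Inter) (auto intro: open_imp_gdelta_in)
      have "locally_compact_space X \<and> regular_space X"
        using assms(2,3) compact_imp_locally_compact_space compact_Hausdorff_imp_regular_space by blast
      then show "X closure_of (X00 G X act) = topspace X" unfolding eqI
        using c opn dense by (intro Baire_category) auto
    qed
  qed
  have iii: "{x \<in> topspace X. stab G act x = stab0 G X act x} \<subseteq> X00 G X act"
  proof
    fix x assume x: "x \<in> {x \<in> topspace X. stab G act x = stab0 G X act x}"
    have "x \<notin> Fr g" if g: "g \<in> carrier G" for g
    proof
      assume fr: "x \<in> Fr g"
      then have "x \<notin> X interior_of fixset X act g"
        by (simp add: Fr_def frontier_of_def interior_of_interior_of)
      then have "g \<notin> stab G act x" using x g by (simp add: stab0_eq)
      then have ne: "act g x \<noteq> x" using g by (simp add: stab_def)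
      have "x \<in> X closure_of (X interior_of fixset X act g)" using fr by (simp add: Fr_def frontier_of_def)
      also have "\<dots> \<subseteq> X closure_of (fixset X act g)" by (simp add: closure_of_mono interior_of_subset)
      also have "\<dots> = fixset X act g" using fixset_closed[OF A assms(3) g] by (simp add: closure_of_eq)
      finally show False using ne by (simp add: fixset_def)
    qed
    then show "x \<in> X00 G X act" using x i by auto
  qed
  have iv: "X00 G X act = topspace X \<longleftrightarrow>
           (\<forall>g\<in>carrier G. closedin X (X interior_of fixset X act g))"
  proof -
    have "Fr g = {} \<longleftrightarrow> closedin X (X interior_of fixset X act g)" for g
      unfolding Fr_def by (subst frontier_of_eq_empty) (auto simp: interior_of_subset_topspace)
    moreover have "X00 G X act = topspace X \<longleftrightarrow> (\<forall>g\<in>carrier G. Fr g = {})"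
      using i by (auto simp: Fr_def frontier_of_subset_topspace dest: frontier_of_subset_topspace[THEN subsetD])
    ultimately show ?thesis by simp
  qed
  show ?thesis using i ii iii iv by (simp add: Fr_def)
qed

end
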